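(* Let $n\ge2$. There is no homeomorphism $\Phi:Q\to(\mathcal K_0^n,d_{AW})$ such that for all $x,y\in Q$, $x\preceq y$ if and only if $\Phi(x)\subseteq\Phi(y)$.
   Context: $Q=\prod_{i=1}^\infty[-1,1]$ with the product topology and the coordinatewise partial order: $x\preceq y$ iff $x_i\le y_i$ for all $i$. $\mathcal K_0^n$: closed convex subsets of $\mathbb R^n$ containing $0$, with the Attouch–Wets metric $d_{AW}(A,K)=\sup_{j\in\mathbb N}\min\{\frac1j,\sup_{\|x\|<j}|d(x,A)-d(x,K)|\}$, $d(x,A)=\inf_{a\in A}\|x-a\|$. *)

theory Defs
  imports "HOL-Analysis.Analysis"
begin

text \<open>The Hilbert cube Q = product of [-1,1] over the naturals, as a subset of
  nat => real (whose standard topology is the product topology).\<close>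
definition hilbert_cube :: "(nat \<Rightarrow> real) set" where
  "hilbert_cube = {x. \<forall>i. x i \<in> {-1..1}}"

definition coord_le :: "(nat \<Rightarrow> real) \<Rightarrow> (nat \<Rightarrow> real) \<Rightarrow> bool" where
  "coord_le x y \<longleftrightarrow> (\<forall>i. x i \<le> y i)"

definition K0 :: "('a::euclidean_space) set set" where
  "K0 = {K. closed K \<and> convex K \<and> 0 \<in> K}"

definition d_AW :: "('a::euclidean_space) set \<Rightarrow> 'a set \<Rightarrow> real" where
  "d_AW A K = (SUP j\<in>{1::nat..}. min (1 / real j)
       (SUP x\<in>{x. norm x < real j}. \<bar>infdist x A - infdist x K\<bar>))"

definition AW_topology :: "('a::euclidean_space) set topology" where
  "AW_topology = Metric_space.mtopology K0 d_AW"

end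

theory Submission
  imports Defs
begin

definition sAW :: "('a::euclidean_space) set \<Rightarrow> 'a set \<Rightarrow> nat \<Rightarrow> real" where
  "sAW A K j = (SUP x\<in>{x. norm x < real j}. \<bar>infdist x A - infdist x K\<bar>)"

lemma dAW_sAW: "d_AW A K = (SUP j\<in>{1::nat..}. min (1 / real j) (sAW A K j))"
  by (simp add: d_AW_def sAW_def)

lemma inner_le:
  shows "\<bar>infdist x A - infdist x K\<bar> \<le> \<bar>infdist 0 A - infdist 0 K\<bar> + 2 * norm x"
proof -
  have "\<bar>infdist x A - infdist 0 A\<bar> \<le> norm x" "\<bar>infdist x K - infdist 0 K\<bar> \<le> norm x"
    using infdist_triangle_abs[of x A 0] infdist_triangle_abs[of x K 0] by (auto simp: dist_norm)
  then show ?thesis by linarith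
qed

lemma inner_bdd:
  shows "bdd_above ((\<lambda>x. \<bar>infdist x A - infdist x K\<bar>) ` {x. norm x < real j})"
  unfolding bdd_above_def
proof (intro exI[of _ "\<bar>infdist 0 A - infdist 0 K\<bar> + 2 * real j"] ballI)
  fix y assume "y \<in> (\<lambda>x. \<bar>infdist x A - infdist x K\<bar>) ` {x. norm x < real j}"
  then obtain x where "norm x < real j" "y = \<bar>infdist x A - infdist x K\<bar>" by auto
  then show "y \<le> \<bar>infdist 0 A - infdist 0 K\<bar> + 2 * real j" using inner_le[of x A K] by linarith
qed

lemma sAW_upper: assumes "norm x < real j"
  shows "\<bar>infdist x A - infdist x K\<bar> \<le> sAW A K j"
  unfolding sAW_def by (rule cSUP_upper[OF _ inner_bdd]) (use assms in auto)

lemma sAW_nonneg: assumes "j \<ge> 1"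
  shows "0 \<le> sAW A K j"
  using sAW_upper[of 0 j A K] assms by simp

lemma sAW_tri: assumes "j \<ge> 1"
  shows "sAW A C j \<le> sAW A B j + sAW B C j"
  unfolding sAW_def[of A C]
proof (rule cSUP_least)
  show "{x::'a. norm x < real j} \<noteq> {}" using assms by (auto intro: exI[of _ 0])
  fix x :: 'a assume "x \<in> {x. norm x < real j}"
  then have "\<bar>infdist x A - infdist x B\<bar> \<le> sAW A B j" "\<bar>infdist x B - infdist x C\<bar> \<le> sAW B C j"
    by (auto intro: sAW_upper)
  then show "\<bar>infdist x A - infdist x C\<bar> \<le> sAW A B j + sAW B C j" by linarith
qed

lemma outer_bdd: "bdd_above ((\<lambda>j. min (1 / real j) (sAW A K j)) ` {1::nat..})"
  unfolding bdd_above_def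
  by (intro exI[of _ 1]) (auto simp: min_le_iff_disj)

lemma dAW_upper: "j \<ge> 1 \<Longrightarrow> min (1 / real j) (sAW A K j) \<le> d_AW A K"
  unfolding dAW_sAW by (rule cSUP_upper[OF _ outer_bdd]) auto

lemma sAW_sym: "sAW A K j = sAW K A j"
  unfolding sAW_def by (simp add: abs_minus_commute)

lemma min3: "0 \<le> a \<Longrightarrow> (b::real) \<le> c + d \<Longrightarrow> 0 \<le> c \<Longrightarrow> 0 \<le> d \<Longrightarrow> min a b \<le> min a c + min a d"
  by (simp add: min_def)

lemma metric_AW: "Metric_space (K0 :: ('a::euclidean_space) set set) d_AW"
proof
  fix A K :: "'a set"
  show "0 \<le> d_AW A K"
    using dAW_upper[of 1 A K] sAW_nonneg[of 1 A K] by simp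
  show "d_AW A K = d_AW K A" unfolding dAW_sAW sAW_sym[of A K] ..
next
  fix A K :: "'a set"
  assume AK: "A \<in> K0" "K \<in> K0"
  show "d_AW A K = 0 \<longleftrightarrow> A = K"
  proof
    assume "A = K"
    have ne: "\<And>j::nat. j \<ge> 1 \<Longrightarrow> {x::'a. norm x < real j} \<noteq> {}" by (auto intro: exI[of _ 0])
    have "min (1 / real j) (sAW A A j) = 0" if "j \<in> {1..}" for j :: nat
    proof -
      have "sAW A A j = (SUP x\<in>{x::'a. norm x < real j}. (0::real))" unfolding sAW_def by simp
      also have "\<dots> = 0" by (rule cSUP_const) (use ne that in auto)
      finally show ?thesis by simp
    qed
    then have "d_AW A A = (SUP j\<in>{1::nat..}. (0::real))"
      unfolding dAW_sAW by (rule SUP_cong[OF refl])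
    then show "d_AW A K = 0" using \<open>A = K\<close> by simp
  next
    assume d0: "d_AW A K = 0"
    have eq: "infdist x A = infdist x K" for x
    proof -
      obtain j :: nat where j: "real j > norm x" "j \<ge> 1"
      proof -
        obtain k :: nat where "norm x < real k" using reals_Archimedean2 by blast
        then show ?thesis using that[of "k+1"] by simp
      qed
      have "min (1 / real j) (sAW A K j) \<le> 0" using dAW_upper[OF j(2), of A K] d0 by simp
      moreover have "1 / real j > 0" using j by simp
      ultimately have "sAW A K j \<le> 0" by linarith
      then show ?thesis using sAW_upper[OF j(1), of A K] by simp
    qed
    have "closed A" "A \<noteq> {}" "closed K" "K \<noteq> {}" using AK by (auto simp: K0_def)
    then have "x \<in> A \<longleftrightarrow> x \<in> K" for x using eq[of x] in_closed_iff_infdist_zero[of A x]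
       in_closed_iff_infdist_zero[of K x] by simp
    then show "A = K" by blast
  qed
next
  fix A B C :: "'a set"
  show "d_AW A C \<le> d_AW A B + d_AW B C"
    unfolding dAW_sAW[of A C]
  proof (rule cSUP_least)
    show "{1::nat..} \<noteq> {}" by auto
    fix j :: nat assume "j \<in> {1..}"
    then have j: "j \<ge> 1" by simp
    have "min (1 / real j) (sAW A C j) \<le> min (1 / real j) (sAW A B j) + min (1 / real j) (sAW B C j)"
      using sAW_tri[OF j, of A C B] sAW_nonneg[OF j, of A B] sAW_nonneg[OF j, of B C]
      by (intro min3) simp_all
    also have "\<dots> \<le> d_AW A B + d_AW B C" using dAW_upper[OF j] by (intro add_mono) auto
    finally show "min (1 / real j) (sAW A C j) \<le> d_AW A B + d_AW B C" .
  qed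
qed

lemma topspace_AW: "topspace (AW_topology :: ('a::euclidean_space) set topology) = K0"
  unfolding AW_topology_def using Metric_space.topspace_mtopology[OF metric_AW] .

theorem mainTheorem20:
  assumes "CARD('n::finite) \<ge> 2"
  shows "\<not> (\<exists>\<Phi> :: (nat \<Rightarrow> real) \<Rightarrow> (real ^ 'n) set.
            homeomorphic_map (top_of_set hilbert_cube) AW_topology \<Phi> \<and>
            (\<forall>x\<in>hilbert_cube. \<forall>y\<in>hilbert_cube. coord_le x y \<longleftrightarrow> \<Phi> x \<subseteq> \<Phi> y))"
proof
  assume "\<exists>\<Phi> :: (nat \<Rightarrow> real) \<Rightarrow> (real ^ 'n) set.
            homeomorphic_map (top_of_set hilbert_cube) AW_topology \<Phi> \<and>
            (\<forall>x\<in>hilbert_cube. \<forall>y\<in>hilbert_cube. coord_le x y \<longleftrightarrow> \<Phi> x \<subseteq> \<Phi> y)"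
  then obtain \<Phi> :: "(nat \<Rightarrow> real) \<Rightarrow> (real ^ 'n) set" where
    h: "homeomorphic_map (top_of_set hilbert_cube) AW_topology \<Phi>" and
    ord: "\<forall>x\<in>hilbert_cube. \<forall>y\<in>hilbert_cube. coord_le x y \<longleftrightarrow> \<Phi> x \<subseteq> \<Phi> y" by blast
  have surj: "\<Phi> ` hilbert_cube = K0"
    using homeomorphic_imp_surjective_map[OF h] topspace_AW by simp
  obtain i j :: 'n where ij: "i \<noteq> j"
  proof -
    have "\<not> (\<forall>i j::'n. i = j)"
    proof
      assume "\<forall>i j::'n. i = j"
      then have "(UNIV::'n set) \<subseteq> {undefined}" by auto
      then have "CARD('n) \<le> 1" by (metis card.empty card.insert card_mono empty_iff finite.intros finite_insert One_nat_def)
      then show False using assms by simp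
    qed
    then show ?thesis using that by blast
  qed
  define ei :: "real ^ 'n" where "ei = axis i 1"
  define ej :: "real ^ 'n" where "ej = axis j 1"
  define L where "L = (\<lambda>v::real^'n. range (\<lambda>t. t *\<^sub>R v))"
  have LK: "L v \<in> K0" for v
  proof -
    have "L v = span {v}" by (simp add: L_def span_singleton)
    then show ?thesis unfolding K0_def
      by (auto simp: closed_span subspace_imp_convex span_zero)
  qed
  have ZK: "{0} \<in> K0" unfolding K0_def by auto
  obtain a where a: "a \<in> hilbert_cube" "\<Phi> a = L (ei + ej)" using surj LK by (metis imageE)
  obtain b where b: "b \<in> hilbert_cube" "\<Phi> b = L ei" using surj LK by (metis imageE)
  obtain c where c: "c \<in> hilbert_cube" "\<Phi> c = L ej" using surj LK by (metis imageE)
  obtain z where z: "z \<in> hilbert_cube" "\<Phi> z = {0}" using surj ZK by (metis imageE)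
  have inH: "(\<lambda>k. max (b k) (c k)) \<in> hilbert_cube" "(\<lambda>k. min (a k) (b k)) \<in> hilbert_cube"
     "(\<lambda>k. min (a k) (c k)) \<in> hilbert_cube"
    using a(1) b(1) c(1) unfolding hilbert_cube_def
    by (auto simp: max_def min_def)
  define m where "m = (\<lambda>k. max (b k) (c k))"
  have "\<Phi> m \<in> K0" using surj inH m_def by blast
  then have cvx: "convex (\<Phi> m)" by (simp add: K0_def)
  have "coord_le b m" "coord_le c m" by (auto simp: coord_le_def m_def)
  then have sb: "L ei \<subseteq> \<Phi> m" "L ej \<subseteq> \<Phi> m" using ord b c inH m_def by auto
  have "L (ei + ej) \<subseteq> \<Phi> m"
  proof
    fix x assume "x \<in> L (ei + ej)"
    then obtain t where x: "x = t *\<^sub>R (ei + ej)" by (auto simp: L_def)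
    have "(2*t) *\<^sub>R ei \<in> \<Phi> m" "(2*t) *\<^sub>R ej \<in> \<Phi> m" using sb by (auto simp: L_def)
    from convexD[OF cvx this, of "1/2" "1/2"]
    show "x \<in> \<Phi> m" by (simp add: x scaleR_add_right)
  qed
  then have am: "coord_le a m" using ord a inH m_def by auto
  have Lint: "L (ei + ej) \<inter> L ei \<subseteq> {0}" "L (ei + ej) \<inter> L ej \<subseteq> {0}"
  proof -
    show "L (ei + ej) \<inter> L ei \<subseteq> {0}"
    proof
      fix x assume "x \<in> L (ei + ej) \<inter> L ei"
      then obtain t s where "x = t *\<^sub>R (ei + ej)" "x = s *\<^sub>R ei" unfolding L_def by blast
      then have "(t *\<^sub>R (ei + ej)) $ j = (s *\<^sub>R ei) $ j" by metis
      then have "t = 0" using ij by (simp add: ei_def ej_def axis_def)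
      then show "x \<in> {0}" using \<open>x = t *\<^sub>R (ei + ej)\<close> by simp
    qed
    show "L (ei + ej) \<inter> L ej \<subseteq> {0}"
    proof
      fix x assume "x \<in> L (ei + ej) \<inter> L ej"
      then obtain t s where "x = t *\<^sub>R (ei + ej)" "x = s *\<^sub>R ej" unfolding L_def by blast
      then have "(t *\<^sub>R (ei + ej)) $ i = (s *\<^sub>R ej) $ i" by metis
      then have "t = 0" using ij by (simp add: ei_def ej_def axis_def)
      then show "x \<in> {0}" using \<open>x = t *\<^sub>R (ei + ej)\<close> by simp
    qed
  qed
  have "coord_le (\<lambda>k. min (a k) (b k)) a" "coord_le (\<lambda>k. min (a k) (b k)) b"
    "coord_le (\<lambda>k. min (a k) (c k)) a" "coord_le (\<lambda>k. min (a k) (c k)) c"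
    by (auto simp: coord_le_def)
  then have "\<Phi> (\<lambda>k. min (a k) (b k)) \<subseteq> {0}" "\<Phi> (\<lambda>k. min (a k) (c k)) \<subseteq> {0}"
    using ord inH a b c Lint by blast+
  then have "coord_le (\<lambda>k. min (a k) (b k)) z" "coord_le (\<lambda>k. min (a k) (c k)) z"
    using ord inH z by auto
  then have "coord_le a z" using am unfolding coord_le_def m_def
  proof (intro allI)
    fix k
    assume h1: "\<forall>i. min (a i) (b i) \<le> z i" and h2: "\<forall>i. min (a i) (c i) \<le> z i"
      and h3: "\<forall>i. a i \<le> max (b i) (c i)"
    show "a k \<le> z k" using h1[rule_format, of k] h2[rule_format, of k] h3[rule_format, of k]
      by (auto simp: min_def max_def split: if_splits)
  qed
  then have "L (ei + ej) \<subseteq> {0}" using ord a z by auto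
  moreover have "ei + ej \<in> L (ei + ej)" unfolding L_def by (metis rangeI scaleR_one)
  moreover have "(ei + ej) $ i \<noteq> 0" using ij by (simp add: ei_def ej_def axis_def)
  ultimately have "ei + ej = 0" "(ei + ej) $ i \<noteq> 0" by blast+
  then show False by simp
qed

end
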